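(* For all $n\ge3$ and $s\ge0$, $$\mathbf{Sf}_{n,3}(p,1)\big|_{p^s}=\binom{n-1}{s+2},$$ and for all $n\ge4$ and $s\ge0$, $$\mathbf{Sf}_{n,4}(p,1)\big|_{p^s}=(2^{s+1}-1)\binom{n-1}{s+3}.$$
   Context: $F_1(p,q)=q$, $F_2(p,q)=q^2$ and $F_m(p,q)=qF_{m-1}(p,q)+pF_{m-2}(p,q)$ for $m\ge3$. Let $(x)_{\downarrow_{F,p,q,0}}=1$ and $(x)_{\downarrow_{F,p,q,k}}=x(x-F_1(p,q))\cdots(x-F_{k-1}(p,q))$ for $k\ge1$. Define the polynomials $\mathbf{Sf}_{n,k}(p,q)$ for $0\le k\le n$ by $x^n=\sum_{k=0}^n\mathbf{Sf}_{n,k}(p,q)(x)_{\downarrow_{F,p,q,k}}$. $\mathbf{Sf}_{n,k}(p,1)$ is the specialization $q=1$, and $f|_{p^s}$ denotes the coefficient of $p^s$ in the polynomial $f$ in $p$. *)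

theory Defs
  imports "HOL-Computational_Algebra.Polynomial"
begin

text \<open>Bivariate polynomials in p, q are represented as int poly poly:
  polynomials in q whose coefficients are polynomials in p.  The variable x of the
  expansion is a third variable, giving int poly poly poly.\<close>

definition pvar :: "int poly poly" where "pvar = [:[:0, 1:]:]"
definition qvar :: "int poly poly" where "qvar = [:0, 1:]"

fun Fib_pq :: "nat \<Rightarrow> int poly poly" where
  "Fib_pq 0 = 0"
| "Fib_pq (Suc 0) = qvar"
| "Fib_pq (Suc (Suc 0)) = qvar ^ 2"
| "Fib_pq (Suc (Suc (Suc m))) = qvar * Fib_pq (Suc (Suc m)) + pvar * Fib_pq (Suc m)"

definition falling_F :: "nat \<Rightarrow> int poly poly poly" where
  "falling_F k = (if k = 0 then 1 else [:0, 1:] * (\<Prod>i\<in>{1..<k}. [:- Fib_pq i, 1:]))"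

definition Sf :: "nat \<Rightarrow> nat \<Rightarrow> int poly poly" where
  "Sf n = (THE c. (\<forall>k>n. c k = 0) \<and>
                  [:0, 1:] ^ n = (\<Sum>k\<le>n. [:c k:] * falling_F k))"

definition Sf_q1 :: "nat \<Rightarrow> nat \<Rightarrow> int poly" where
  "Sf_q1 n k = poly (Sf n k) 1"

end

theory Submission
  imports Defs
begin

lemma falling_F_Suc: "falling_F (Suc k) = falling_F k * [:- Fib_pq k, 1:]"
proof (cases "k = 0")
  case True then show ?thesis by (simp add: falling_F_def)
next
  case False
  then have "{1..<Suc k} = insert k {1..<k}" by auto
  then show ?thesis using False by (simp add: falling_F_def mult.assoc mult.commute mult.left_commute)
qed

lemma falling_F_monic: "degree (falling_F k) = k \<and> lead_coeff (falling_F k) = 1"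
proof (induction k)
  case 0 then show ?case by (simp add: falling_F_def)
next
  case (Suc k)
  have nz: "falling_F k \<noteq> 0" using Suc by auto
  have nz2: "[:- Fib_pq k, 1:] \<noteq> 0" by simp
  have d: "degree (falling_F k * [:- Fib_pq k, 1:]) = Suc k"
    using Suc degree_mult_eq[OF nz nz2] by simp
  have l0: "lead_coeff [:- Fib_pq k, 1:] = 1" by simp
  have l: "lead_coeff (falling_F k * [:- Fib_pq k, 1:]) = 1"
  proof -
    have "coeff (falling_F k) k = 1" using Suc by metis
    have lf: "lead_coeff (falling_F k) = 1" using Suc by blast
    show ?thesis by (simp only: lead_coeff_mult lf l0 mult_1_right)
  qed
  show ?case unfolding falling_F_Suc using d l by blast
qed

lemma uniq: "(\<Sum>k\<le>n. [:e k:] * falling_F k) = 0 \<Longrightarrow> k \<le> n \<Longrightarrow> e k = 0"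
proof (induction n arbitrary: k)
  case 0 then show ?case using falling_F_monic[of 0] by (simp add: falling_F_def)
next
  case (Suc n)
  define A where "A = (\<Sum>k\<le>n. [:e k:] * falling_F k)"
  have degA: "degree A \<le> n" unfolding A_def
  proof (rule degree_sum_le)
    fix i assume "i \<in> {..n}"
    then have "degree (falling_F i) \<le> n" using falling_F_monic[of i] by simp
    moreover have "degree ([:e i:] * falling_F i) \<le> degree (falling_F i)"
      using degree_mult_le[of "[:e i:]" "falling_F i"] by simp
    ultimately show "degree ([:e i:] * falling_F i) \<le> n" by simp
  qed auto
  have eq: "A + [:e (Suc n):] * falling_F (Suc n) = 0" using Suc.prems(1) by (simp add: A_def)
  have "coeff (A + [:e (Suc n):] * falling_F (Suc n)) (Suc n) = e (Suc n)"
  proof -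
    have "coeff (falling_F (Suc n)) (Suc n) = 1" using falling_F_monic[of "Suc n"] by metis
    then show ?thesis using degA coeff_eq_0[of A "Suc n"] by simp
  qed
  then have e1: "e (Suc n) = 0" using eq by (metis coeff_0)
  then have "A = 0" using eq by simp
  then show ?case using Suc e1 unfolding A_def by (cases "k = Suc n") auto
qed

fun S :: "nat \<Rightarrow> nat \<Rightarrow> int poly poly" where
  "S 0 k = (if k = 0 then 1 else 0)"
| "S (Suc n) 0 = 0"
| "S (Suc n) (Suc k) = S n k + Fib_pq (Suc k) * S n (Suc k)"

lemma S_zero: "k > n \<Longrightarrow> S n k = 0"
proof (induction n arbitrary: k)
  case 0 then show ?case by simp
next
  case (Suc n) then show ?case by (cases k) auto
qed

lemma S_expand: "[:0,1:] ^ n = (\<Sum>k\<le>n. [:S n k:] * falling_F k)"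
proof (induction n)
  case 0 then show ?case by (simp add: falling_F_def)
next
  case (Suc n)
  have xF: "[:0,1:] * falling_F k = falling_F (Suc k) + [:Fib_pq k:] * falling_F k" for k
    unfolding falling_F_Suc by (simp add: algebra_simps)
  have "[:0,1:] ^ Suc n = (\<Sum>k\<le>n. [:S n k:] * ([:0,1:] * falling_F k))"
    using Suc by (simp add: sum_distrib_left algebra_simps)
  also have "\<dots> = (\<Sum>k\<le>n. [:S n k:] * falling_F (Suc k)) + (\<Sum>k\<le>n. [:Fib_pq k * S n k:] * falling_F k)"
    unfolding xF by (simp add: sum.distrib algebra_simps)
  also have "(\<Sum>k\<le>n. [:Fib_pq k * S n k:] * falling_F k) = (\<Sum>k\<le>Suc n. [:Fib_pq k * S n k:] * falling_F k)"
    using S_zero[of n "Suc n"] by simp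
  also have "\<dots> = (\<Sum>k\<le>n. [:Fib_pq (Suc k) * S n (Suc k):] * falling_F (Suc k))"
    by (subst sum.atMost_Suc_shift) simp
  also have "(\<Sum>k\<le>n. [:S n k:] * falling_F (Suc k)) + \<dots> = (\<Sum>k\<le>n. [:S (Suc n) (Suc k):] * falling_F (Suc k))"
    by (simp add: sum.distrib smult_add_left)
  also have "\<dots> = (\<Sum>k\<le>Suc n. [:S (Suc n) k:] * falling_F k)"
    by (subst sum.atMost_Suc_shift) simp
  finally show ?case .
qed

lemma Sf_eq: "Sf n = S n"
  unfolding Sf_def
proof (rule the_equality)
  show "(\<forall>k>n. S n k = 0) \<and> [:0, 1:] ^ n = (\<Sum>k\<le>n. [:S n k:] * falling_F k)"
    using S_zero S_expand by auto
next
  fix c assume c: "(\<forall>k>n. c k = 0) \<and> [:0, 1:] ^ n = (\<Sum>k\<le>n. [:c k:] * falling_F k)"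
  show "c = S n"
  proof
    fix k
    show "c k = S n k"
    proof (cases "k \<le> n")
      case False then show ?thesis using c S_zero[of n k] by auto
    next
      case True
      have "(\<Sum>k\<le>n. [:c k - S n k:] * falling_F k) = (\<Sum>k\<le>n. [:c k:] * falling_F k) - (\<Sum>k\<le>n. [:S n k:] * falling_F k)"
        by (simp add: sum_subtractf[symmetric] smult_diff_left)
      also have "\<dots> = 0" using c S_expand[of n] by simp
      finally show ?thesis using uniq[of "\<lambda>k. c k - S n k" n k] True by simp
    qed
  qed
qed

definition T :: "nat \<Rightarrow> nat \<Rightarrow> int poly" where "T n k = poly (S n k) 1"

lemma T_Suc: "T (Suc n) (Suc k) = T n k + poly (Fib_pq (Suc k)) 1 * T n (Suc k)"
  by (simp add: T_def)

lemma F2: "poly (Fib_pq 2) 1 = 1" by (simp add: qvar_def numeral_2_eq_2)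
lemma F3: "poly (Fib_pq 3) 1 = [:1,1:]" by (simp add: qvar_def pvar_def numeral_3_eq_3 pCons_one poly_eq_iff coeff_pCons coeff_1 split: nat.split)
lemma F4: "poly (Fib_pq 4) 1 = [:1,2:]"
  by (simp add: qvar_def pvar_def eval_nat_numeral pCons_one numeral_poly poly_eq_iff coeff_pCons coeff_1 split: nat.split)

lemma T1: "n \<ge> 1 \<Longrightarrow> T n 1 = 1"
proof (induction n rule: nat_induct_at_least)
  case base then show ?case by (simp add: T_def)
next
  case (Suc n)
  have "S n 0 = 0" using Suc by (cases n) auto
  then show ?case using Suc T_Suc[of n 0] by (simp add: T_def qvar_def)
qed

lemma T2: "n \<ge> 1 \<Longrightarrow> T n 2 = of_nat (n - 1)"
proof (induction n rule: nat_induct_at_least)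
  case base then show ?case by (simp add: T_def numeral_2_eq_2)
next
  case (Suc n) then show ?case using T_Suc[of n 1] T1[of n] F2 by (simp add: numeral_2_eq_2 of_nat_diff)
qed

lemma coeff_11: "coeff ([:1,1:] * (p::int poly)) s = coeff p s + (if s = 0 then 0 else coeff p (s - 1))"
  by (cases s) (simp_all add: mult_pCons_left coeff_pCons)

lemma coeff_12: "coeff ([:1,2:] * (p::int poly)) s = coeff p s + (if s = 0 then 0 else 2 * coeff p (s - 1))"
  by (cases s) (simp_all add: mult_pCons_left coeff_pCons)

lemma T3: "n \<ge> 1 \<Longrightarrow> coeff (T n 3) s = int ((n - 1) choose (s + 2))"
proof (induction n arbitrary: s rule: nat_induct_at_least)
  case base then show ?case using S_zero[of 1 3] by (simp add: T_def)
next
  case (Suc n)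
  obtain m where m: "n = Suc m" using Suc by (cases n) auto
  have e: "T (Suc n) 3 = of_nat (n - 1) + [:1,1:] * T n 3"
    using T_Suc[of n 2] T2[of n] F3 Suc by (simp add: numeral_3_eq_3 numeral_2_eq_2)
  show ?case
  proof (cases s)
    case 0
    then show ?thesis unfolding e using Suc.IH[of 0] by (simp add: coeff_11 of_nat_poly m numeral_2_eq_2)
  next
    case (Suc t)
    then show ?thesis unfolding e using Suc.IH[of s] Suc.IH[of t]
      by (simp add: coeff_11 of_nat_poly m numeral_2_eq_2)
  qed
qed

lemma T4: "n \<ge> 1 \<Longrightarrow> coeff (T n 4) s = (2 ^ (s + 1) - 1) * int ((n - 1) choose (s + 3))"
proof (induction n arbitrary: s rule: nat_induct_at_least)
  case base then show ?case using S_zero[of 1 4] by (simp add: T_def)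
next
  case (Suc n)
  obtain m where m: "n = Suc m" using Suc by (cases n) auto
  have e: "T (Suc n) 4 = T n 3 + [:1,2:] * T n 4"
    using T_Suc[of n 3] F4 Suc by (simp add: eval_nat_numeral)
  show ?case
  proof (cases s)
    case 0
    then show ?thesis unfolding e using Suc.IH[of 0] T3[of n 0] Suc.hyps
      by (simp add: coeff_12 m eval_nat_numeral)
  next
    case (Suc t)
    then show ?thesis unfolding e using Suc.IH[of s] Suc.IH[of t] T3[of n s] \<open>n \<ge> 1\<close>
      by (simp add: coeff_12 m eval_nat_numeral algebra_simps)
  qed
qed

theorem theorem13:
  shows "(\<forall>n s. n \<ge> 3 \<longrightarrow> coeff (Sf_q1 n 3) s = int ((n - 1) choose (s + 2)))
       \<and> (\<forall>n s. n \<ge> 4 \<longrightarrow>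
            coeff (Sf_q1 n 4) s = (2 ^ (s + 1) - 1) * int ((n - 1) choose (s + 3)))"
proof -
  have q: "Sf_q1 n k = T n k" for n k by (simp add: Sf_q1_def T_def Sf_eq)
  show ?thesis unfolding q using T3 T4 by auto
qed

end
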